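(* Let $g,f\in\mathbb{Z}[[x]]$ with $g(0)=1$, $f(0)=0$ and $f'(0)\in\{1,-1\}$, and suppose the Riordan array $(g,f)$ is an involution, i.e. $g(x)g(f(x))=1$ and $f(f(x))=x$. Let $a(x)=\frac{x\,g(x)}{f(x)}$ (a formal power series with invertible constant term). Then the almost Riordan array $(a;g,f)$ is an involution in the group of almost Riordan arrays of first order.
   Context: All matrices are infinite lower-triangular with rows and columns indexed by $n,k\ge0$. $[x^n]h(x)$ denotes the coefficient of $x^n$ in $h$. The Riordan array $(g,f)$ is the matrix with entries $[x^n]g(x)f(x)^k$; it is an involution if $(g,f)^2=(1,x)$, equivalently $g(x)g(f(x))=1$ and $f(f(x))=x$. An almost Riordan array of first order $(a;g,f)$ has associated matrix $M$ with $M_{0,0}=a_0$, $M_{0,k}=0$ for $k\ge1$, $M_{n,0}=a_n$ for $n\ge1$, and $M_{n,k}=[x^{n-1}]\,g(x)f(x)^{k-1}$ for $n,k\ge1$; the product $(a;g,f)\cdot(b;u,v)=\big(b_0a+xg(x)\tilde b(f(x));\ g\,u(f),\ v(f)\big)$, $\tilde b(x)=(b(x)-b_0)/x$, corresponds to the matrix product. It is an involution if $M^2=I$. *)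

theory Defs
  imports "HOL-Computational_Algebra.Formal_Power_Series"
begin

definition almost_riordan_matrix :: "int fps \<Rightarrow> int fps \<Rightarrow> int fps \<Rightarrow> nat \<Rightarrow> nat \<Rightarrow> int" where
  "almost_riordan_matrix a g f n k =
     (if k = 0 then fps_nth a n
      else if n = 0 then 0
      else fps_nth (g * f ^ (k - 1)) (n - 1))"

text \<open>Product of two infinite lower-triangular matrices: (M N)(n,k) = sum over j of M(n,j) N(j,k);
  for lower-triangular M only j <= n contribute.\<close>
definition lt_matrix_mult :: "(nat \<Rightarrow> nat \<Rightarrow> int) \<Rightarrow> (nat \<Rightarrow> nat \<Rightarrow> int) \<Rightarrow> nat \<Rightarrow> nat \<Rightarrow> int" where
  "lt_matrix_mult M N n k = (\<Sum>j\<le>n. M n j * N j k)"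

definition is_involution_matrix :: "(nat \<Rightarrow> nat \<Rightarrow> int) \<Rightarrow> bool" where
  "is_involution_matrix M \<longleftrightarrow>
     (\<forall>n k. lt_matrix_mult M M n k = (if n = k then 1 else 0))"

text \<open>a(x) = x g(x) / f(x): the unique power series a with a * f = x * g
  (unique since int fps is an integral domain and f is nonzero).\<close>
definition xg_div_f :: "int fps \<Rightarrow> int fps \<Rightarrow> int fps" where
  "xg_div_f g f = (THE a. a * f = fps_X * g)"

end

theory Submission
  imports Defs
begin
unbundle fps_syntax

lemma L1:
  fixes g h f :: "int fps"
  assumes f0: "f$0 = 0"
  shows "(g * (h oo f))$m = (\<Sum>i=0..m. h$i * (g*f^i)$m)"
proof -
  have "(g * (h oo f))$m = (\<Sum>k=0..m. g$k * (\<Sum>i=0..m-k. h$i * (f^i)$(m-k)))"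
    by (simp only: fps_mult_nth fps_compose_nth)
  also have "\<dots> = (\<Sum>k=0..m. g$k * (\<Sum>i=0..m. h$i * (f^i)$(m-k)))"
  proof (rule sum.cong[OF refl])
    fix k assume "k \<in> {0..m}"
    have "(\<Sum>i=0..m-k. h$i * (f^i)$(m-k)) = (\<Sum>i=0..m. h$i * (f^i)$(m-k))"
      by (rule sum.mono_neutral_left) (auto simp: startsby_zero_power_prefix[OF f0])
    then show "g$k * (\<Sum>i=0..m-k. h$i * (f^i)$(m-k)) = g$k * (\<Sum>i=0..m. h$i * (f^i)$(m-k))"
      by simp
  qed
  also have "\<dots> = (\<Sum>k=0..m. \<Sum>i=0..m. g$k * (h$i * (f^i)$(m-k)))"
    by (simp only: sum_distrib_left)
  also have "\<dots> = (\<Sum>i=0..m. \<Sum>k=0..m. g$k * (h$i * (f^i)$(m-k)))"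
    by (rule sum.swap)
  also have "\<dots> = (\<Sum>i=0..m. h$i * (\<Sum>k=0..m. g$k * (f^i)$(m-k)))"
    by (simp only: sum_distrib_left mult.left_commute)
  also have "\<dots> = (\<Sum>i=0..m. h$i * (g*f^i)$m)"
    by (simp only: fps_mult_nth)
  finally show ?thesis .
qed

definition T :: "int fps \<Rightarrow> int fps \<Rightarrow> int fps \<Rightarrow> int fps \<Rightarrow> int fps" where
  "T a g f h = fps_const (h$0) * a + fps_X * g * (fps_shift 1 h oo f)"

lemma Tsum:
  fixes a g f h :: "int fps"
  assumes f0: "f$0 = 0"
  shows "(\<Sum>j\<le>n. almost_riordan_matrix a g f n j * h$j) = T a g f h $ n"
proof (cases n)
  case 0
  then show ?thesis by (simp add: T_def almost_riordan_matrix_def)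
next
  case (Suc m)
  have "(\<Sum>j\<le>n. almost_riordan_matrix a g f n j * h$j)
      = a$n * h$0 + (\<Sum>i\<le>m. (g*f^i)$m * h$(Suc i))"
    unfolding Suc sum.atMost_Suc_shift by (simp add: almost_riordan_matrix_def)
  also have "\<dots> = T a g f h $ n"
    using L1[OF f0, of g "fps_shift 1 h" m]
    by (simp add: T_def Suc atLeast0AtMost mult_ac)
  finally show ?thesis .
qed

lemma col:
  fixes a g f :: "int fps"
  shows "almost_riordan_matrix a g f j k =
     (if k = 0 then a else fps_X * (g * f^(k-1))) $ j"
  by (simp add: almost_riordan_matrix_def)

theorem mainTheorem10:
  fixes g f :: "int fps"
  assumes "fps_nth g 0 = 1" and "fps_nth f 0 = 0" and "fps_nth f 1 = 1 \<or> fps_nth f 1 = -1"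
    and "g * (g oo f) = 1" and "f oo f = fps_X"
  shows "is_involution_matrix (almost_riordan_matrix (xg_div_f g f) g f)"
proof -
  note f0 = assms(2) and gg = assms(4) and ff = assms(5)
  define u where "u = fps_shift 1 f"
  have fu': "f = fps_X * u"
    unfolding u_def using f0 by (intro fps_ext) (auto simp: not0_implies_Suc)
  hence fu: "f = u * fps_X" by (simp add: mult.commute)
  have s: "f$1 * f$1 = 1" using assms(3) by auto
  have u0: "u$0 * f$1 = 1" using s by (simp add: u_def)
  have fnz: "f \<noteq> 0" using assms(3) by auto
  define a0 where "a0 = g * fps_right_inverse u (f$1)"
  have a0f: "a0 * f = fps_X * g"
    using fps_right_inverse[OF u0] unfolding a0_def fu by (simp add: mult_ac)
  have ex: "\<exists>!a. a * f = fps_X * g"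
  proof
    show "a0 * f = fps_X * g" by (rule a0f)
  next
    fix b assume "b * f = fps_X * g"
    with a0f have "b * f = a0 * f" by simp
    with fnz show "b = a0" by simp
  qed
  define a where "a = xg_div_f g f"
  have af: "a * f = fps_X * g"
    unfolding a_def xg_div_f_def by (rule theI'[OF ex])
  define c where "c = a$0"
  have Xs: "fps_X * fps_shift 1 a = a - fps_const c"
    by (intro fps_ext) (simp add: c_def)
  have Xf: "fps_X oo f = f" using f0 by simp
  have c1: "(fps_shift 1 a oo f) * f = (a oo f) - fps_const c"
  proof -
    have "(fps_shift 1 a oo f) * f = (fps_shift 1 a oo f) * (fps_X oo f)" using Xf by simp
    also have "\<dots> = (fps_shift 1 a * fps_X) oo f" using fps_compose_mult_distrib[OF f0] by simp
    also have "\<dots> = (a - fps_const c) oo f" using Xs by (simp add: mult_ac)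
    also have "\<dots> = (a oo f) - fps_const c" by (simp add: fps_compose_sub_distrib)
    finally show ?thesis .
  qed
  have c2: "(a oo f) * fps_X = f * (g oo f)"
  proof -
    have "(a oo f) * fps_X = (a oo f) * (f oo f)" using ff by simp
    also have "\<dots> = (a * f) oo f" using fps_compose_mult_distrib[OF f0] by simp
    also have "\<dots> = (fps_X * g) oo f" using af by simp
    also have "\<dots> = f * (g oo f)" using fps_compose_mult_distrib[OF f0] Xf by simp
    finally show ?thesis .
  qed
  have Ta: "T a g f a = 1"
  proof -
    have "T a g f a * f = fps_const c * (a * f) + fps_X * g * ((fps_shift 1 a oo f) * f)"
      by (simp add: T_def c_def algebra_simps)
    also have "\<dots> = fps_const c * (fps_X * g) + fps_X * g * ((a oo f) - fps_const c)"
      using af c1 by simp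
    also have "\<dots> = g * ((a oo f) * fps_X)" by (simp add: algebra_simps)
    also have "\<dots> = (g * (g oo f)) * f" using c2 by (simp add: mult_ac)
    also have "\<dots> = 1 * f" using gg by simp
    finally have "T a g f a * f = 1 * f" .
    with fnz show ?thesis by simp
  qed
  have Tk: "T a g f (fps_X * (g * f^k)) = fps_X ^ Suc k" for k
  proof -
    have sh: "fps_shift 1 (fps_X * (g * f^k)) = g * f^k" by (intro fps_ext) simp
    have "T a g f (fps_X * (g * f^k)) = fps_X * g * ((g * f^k) oo f)"
      by (simp only: T_def sh) simp
    also have "(g * f^k) oo f = (g oo f) * fps_X ^ k"
      using fps_compose_mult_distrib[OF f0] fps_compose_power[OF f0, symmetric] ff by simp
    finally show ?thesis using gg by (simp add: mult_ac)
  qed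
  show ?thesis
    unfolding is_involution_matrix_def lt_matrix_mult_def a_def[symmetric]
  proof (intro allI)
    fix n k
    have "(\<Sum>j\<le>n. almost_riordan_matrix a g f n j * almost_riordan_matrix a g f j k)
        = T a g f (if k = 0 then a else fps_X * (g * f^(k-1))) $ n"
      unfolding col[of a g f _ k] by (rule Tsum[OF f0])
    also have "\<dots> = (if n = k then 1 else 0)"
      using Tk[of "k-1"] Ta by (cases k) auto
    finally show "(\<Sum>j\<le>n. almost_riordan_matrix a g f n j * almost_riordan_matrix a g f j k)
        = (if n = k then 1 else 0)" .
  qed
qed

end
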